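(* Let $V:\mathbb{R}\to\mathbb{R}$ be convex and $L$-Lipschitz with $m:=e^{-V}$ a probability density. Let $0<c<C$ and $f\in\mathcal{P}_{c,C}$. Then there exist constants $0<c'<C'$, depending only on $c$, $C$ and $V$, such that every measure on the $W_2$-geodesic between $f$ and $m$ belongs to $\mathcal{P}_{c',C'}$.
   Context: For $0<a<b$, $\mathcal{P}_{a,b}:=\{g\in\mathcal{P}(\mathbb{R}):\ a\,m\le g\le b\,m\}$ (probability densities pointwise between $a\,m$ and $b\,m$). The $W_2$-geodesic between $m$ and $f$ is $(\mu_t)_{t\in[0,1]}$, $\mu_t=((1-t)\mathrm{id}+tT)_\# m$, where $T=F_f^{-1}\circ F_m$ is the monotone optimal transport map from $m$ to $f$ ($F$ denoting cumulative distribution functions). *)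

theory Defs
  imports "HOL-Probability.Probability"
begin

definition Pab :: "real \<Rightarrow> real \<Rightarrow> (real \<Rightarrow> real) \<Rightarrow> (real \<Rightarrow> real) set" where
  "Pab a b m = {g. g \<in> borel_measurable borel
      \<and> prob_space (density lborel (\<lambda>x. ennreal (g x)))
      \<and> (\<forall>x. a * m x \<le> g x \<and> g x \<le> b * m x)}"

definition cdf_of :: "(real \<Rightarrow> real) \<Rightarrow> real \<Rightarrow> real" where
  "cdf_of g x = measure (density lborel (\<lambda>y. ennreal (g y))) {..x}"

definition quantile_of :: "(real \<Rightarrow> real) \<Rightarrow> real \<Rightarrow> real" where
  "quantile_of g u = Inf {x. u \<le> cdf_of g x}"

definition ot_map :: "(real \<Rightarrow> real) \<Rightarrow> (real \<Rightarrow> real) \<Rightarrow> real \<Rightarrow> real" where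
  "ot_map m f x = quantile_of f (cdf_of m x)"

definition geodesic_pt :: "(real \<Rightarrow> real) \<Rightarrow> (real \<Rightarrow> real) \<Rightarrow> real \<Rightarrow> real measure" where
  "geodesic_pt m f t = distr (density lborel (\<lambda>x. ennreal (m x))) lborel
      (\<lambda>x. (1 - t) * x + t * ot_map m f x)"

end

theory Submission
  imports Defs
begin



lemma emeasure_density_bounds:
  fixes w :: "real \<Rightarrow> real"
  assumes w: "w \<in> borel_measurable borel" and A: "A \<in> sets borel"
    and b: "\<And>x. x \<in> A \<Longrightarrow> lo \<le> w x \<and> w x \<le> hi" and lo: "0 \<le> lo"
  shows "ennreal lo * emeasure lborel A \<le> emeasure (density lborel (\<lambda>x. ennreal (w x))) A"
    and "emeasure (density lborel (\<lambda>x. ennreal (w x))) A \<le> ennreal hi * emeasure lborel A"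
proof -
  have e: "emeasure (density lborel (\<lambda>x. ennreal (w x))) A = (\<integral>\<^sup>+x. ennreal (w x) * indicator A x \<partial>lborel)"
    using A w by (simp add: emeasure_density)
  have "ennreal lo * emeasure lborel A = (\<integral>\<^sup>+x. ennreal lo * indicator A x \<partial>lborel)"
    using A by (simp add: nn_integral_cmult_indicator)
  also have "\<dots> \<le> (\<integral>\<^sup>+x. ennreal (w x) * indicator A x \<partial>lborel)"
    by (intro nn_integral_mono) (auto simp: indicator_def b ennreal_leI)
  finally show "ennreal lo * emeasure lborel A \<le> emeasure (density lborel (\<lambda>x. ennreal (w x))) A"
    using e by simp
  have "(\<integral>\<^sup>+x. ennreal (w x) * indicator A x \<partial>lborel) \<le> (\<integral>\<^sup>+x. ennreal hi * indicator A x \<partial>lborel)"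
    by (intro nn_integral_mono) (auto simp: indicator_def b ennreal_leI)
  also have "\<dots> = ennreal hi * emeasure lborel A"
    using A by (simp add: nn_integral_cmult_indicator)
  finally show "emeasure (density lborel (\<lambda>x. ennreal (w x))) A \<le> ennreal hi * emeasure lborel A"
    using e by simp
qed

lemma emeasure_density_compare:
  fixes w1 w2 :: "real \<Rightarrow> real"
  assumes w1: "w1 \<in> borel_measurable borel" and w2: "w2 \<in> borel_measurable borel" and A: "A \<in> sets borel"
    and b: "\<And>x. w1 x \<le> k * w2 x" and k: "0 \<le> k"
  shows "emeasure (density lborel (\<lambda>x. ennreal (w1 x))) A \<le> ennreal k * emeasure (density lborel (\<lambda>x. ennreal (w2 x))) A"
proof -
  have "emeasure (density lborel (\<lambda>x. ennreal (w1 x))) A = (\<integral>\<^sup>+x. ennreal (w1 x) * indicator A x \<partial>lborel)"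
    using A w1 by (simp add: emeasure_density)
  also have "\<dots> \<le> (\<integral>\<^sup>+x. ennreal k * (ennreal (w2 x) * indicator A x) \<partial>lborel)"
    apply (intro nn_integral_mono)
    apply (auto simp: indicator_def b ennreal_leI)
    by (metis b ennreal_le_iff ennreal_mult' k mult_nonneg_nonneg order.trans ennreal_leI)
  also have "\<dots> = ennreal k * (\<integral>\<^sup>+x. ennreal (w2 x) * indicator A x \<partial>lborel)"
    using A w2 by (intro nn_integral_cmult) auto
  also have "\<dots> = ennreal k * emeasure (density lborel (\<lambda>x. ennreal (w2 x))) A"
    using A w2 by (simp add: emeasure_density)
  finally show ?thesis .
qed



lemma measure_eq_Ioc:
  fixes M1 M2 :: "real measure"
  assumes s1: "sets M1 = sets borel" and s2: "sets M2 = sets borel"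
    and fin: "\<And>a b. a \<le> b \<Longrightarrow> emeasure M1 {a<..b} \<noteq> \<infinity>"
    and eq: "\<And>a b. a \<le> b \<Longrightarrow> emeasure M1 {a<..b} = emeasure M2 {a<..b}"
  shows "M1 = M2"
proof (rule measure_eqI_generator_eq[where \<Omega>=UNIV and E="range (\<lambda>(a, b). {a<..b::real})"
      and A="\<lambda>i. {- real (i::nat)<..real i}"])
  fix X assume "X \<in> range (\<lambda>(a, b). {a<..b::real})"
  then obtain a b where Xeq: "X = {a<..b}" by auto
  then show "emeasure M1 X = emeasure M2 X"
    by (cases "a \<le> b") (simp_all add: eq)
next
  show "(\<Union>i. {- real (i::nat)<..real i}) = UNIV"
    by (rule UN_Ioc_eq_UNIV)
next
  fix i :: nat show "emeasure M1 {- real i<..real i} \<noteq> \<infinity>" by (rule fin) simp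
qed (auto simp: s1 s2 borel_sigma_sets_Ioc Int_stable_def)

lemma measure_le_from_Ioc:
  fixes M1 M2 :: "real measure"
  assumes f1: "finite_measure M1" and f2: "finite_measure M2"
    and s1: "sets M1 = sets borel" and s2: "sets M2 = sets borel"
    and le: "\<And>a b. a \<le> b \<Longrightarrow> measure M1 {a<..b} \<le> measure M2 {a<..b}"
    and A: "A \<in> sets borel"
  shows "emeasure M1 A \<le> emeasure M2 A"
proof -
  interpret F1: finite_borel_measure M1 using f1 s1 by (simp add: finite_borel_measure_def finite_borel_measure_axioms_def)
  interpret F2: finite_borel_measure M2 using f2 s2 by (simp add: finite_borel_measure_def finite_borel_measure_axioms_def)
  define \<Phi> where "\<Phi> x = cdf M2 x - cdf M1 x" for x
  have mono: "\<Phi> x \<le> \<Phi> y" if "x \<le> y" for x y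
  proof (cases "x = y")
    case False
    then have "x < y" using that by simp
    then show ?thesis using le[of x y] F1.cdf_diff_eq[of x y] F2.cdf_diff_eq[of x y] \<open>x \<le> y\<close>
      by (simp add: \<Phi>_def)
  qed simp
  have rc: "continuous (at_right a) \<Phi>" for a
    unfolding \<Phi>_def by (intro continuous_diff F1.cdf_is_right_cont F2.cdf_is_right_cont)
  define P where "P = interval_measure \<Phi>"
  have eP: "emeasure P {a<..b} = \<Phi> b - \<Phi> a" if "a \<le> b" for a b
    unfolding P_def using that mono rc by (intro emeasure_interval_measure_Ioc) auto
  define S where "S = measure_of UNIV (sets borel) (\<lambda>A. emeasure M1 A + emeasure P A)"
  have eS: "emeasure S B = emeasure M1 B + emeasure P B" if B: "B \<in> sets borel" for B
    unfolding S_def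
  proof (rule emeasure_measure_of_sigma[OF _ _ _ B])
    show "sigma_algebra UNIV (sets borel)"
      using sets.sigma_algebra_axioms[of borel] by simp
    show "positive (sets borel) (\<lambda>A. emeasure M1 A + emeasure P A)"
      by (simp add: positive_def P_def)
    show "countably_additive (sets borel) (\<lambda>A. emeasure M1 A + emeasure P A)"
    proof (rule countably_additiveI)
      fix A :: "nat \<Rightarrow> real set" assume A: "range A \<subseteq> sets borel" "disjoint_family A"
      have "(\<Sum>i. emeasure M1 (A i) + emeasure P (A i)) = (\<Sum>i. emeasure M1 (A i)) + (\<Sum>i. emeasure P (A i))"
        by (rule suminf_add[symmetric]) auto
      also have "\<dots> = emeasure M1 (\<Union>i. A i) + emeasure P (\<Union>i. A i)"
        using A by (simp add: suminf_emeasure s1 P_def)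
      finally show "(\<Sum>i. emeasure M1 (A i) + emeasure P (A i)) = emeasure M1 (\<Union>i. A i) + emeasure P (\<Union>i. A i)" .
    qed
  qed
  have "S = M2"
  proof (rule measure_eq_Ioc)
    show "sets S = sets borel" unfolding S_def
      using sigma_algebra.sets_measure_of_eq[OF sets.sigma_algebra_axioms[of borel]] by simp
    show "sets M2 = sets borel" by (rule s2)
    fix a b :: real assume ab: "a \<le> b"
    have "emeasure S {a<..b} = ennreal (cdf M1 b - cdf M1 a) + ennreal (\<Phi> b - \<Phi> a)"
      using eS[of "{a<..b}"] F1.emeasure_Ioc[OF ab] eP[OF ab] by simp
    also have "\<dots> = ennreal (cdf M2 b - cdf M2 a)"
      using F1.cdf_nondecreasing[OF ab] mono[OF ab] by (subst ennreal_plus[symmetric]) (auto simp: \<Phi>_def)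
    also have "\<dots> = emeasure M2 {a<..b}" using F2.emeasure_Ioc[OF ab] by simp
    finally show "emeasure S {a<..b} = emeasure M2 {a<..b}" .
    then show "emeasure S {a<..b} \<noteq> \<infinity>" using F2.emeasure_finite by simp
  qed
  then have "emeasure M2 A = emeasure M1 A + emeasure P A" using eS[OF A] by simp
  then show ?thesis by simp
qed



lemma density_from_bounds:
  fixes m :: "real \<Rightarrow> real" and M :: "real measure"
  assumes mb: "m \<in> borel_measurable borel" and mpos: "\<And>x. 0 < m x"
    and fin: "finite_measure (density lborel (\<lambda>x. ennreal (m x)))"
    and fM: "finite_measure M" and sM: "sets M = sets borel"
    and p: "0 < p" and pq: "p \<le> q"
    and lo: "\<And>A. A \<in> sets borel \<Longrightarrow> ennreal p * emeasure (density lborel (\<lambda>x. ennreal (m x))) A \<le> emeasure M A"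
    and hi: "\<And>A. A \<in> sets borel \<Longrightarrow> emeasure M A \<le> ennreal q * emeasure (density lborel (\<lambda>x. ennreal (m x))) A"
  shows "\<exists>g \<in> borel_measurable borel. (\<forall>x. p * m x \<le> g x \<and> g x \<le> q * m x) \<and> M = density lborel (\<lambda>x. ennreal (g x))"
proof -
  define \<nu> where "\<nu> = density lborel (\<lambda>x. ennreal (m x))"
  interpret F: finite_measure \<nu> using fin by (simp add: \<nu>_def)
  interpret FM: finite_measure M by (rule fM)
  have snu: "sets \<nu> = sets borel" by (simp add: \<nu>_def)
  have ac: "absolutely_continuous \<nu> M"
    unfolding absolutely_continuous_def
  proof
    fix A assume A: "A \<in> null_sets \<nu>"
    then have "A \<in> sets borel" "emeasure \<nu> A = 0" using snu by auto
    then have "emeasure M A \<le> 0" using hi[of A] by (simp add: \<nu>_def)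
    then show "A \<in> null_sets M" using \<open>A \<in> sets borel\<close> sM by (auto simp: null_sets_def)
  qed
  obtain h where hm: "h \<in> borel_measurable \<nu>" and hM: "density \<nu> h = M"
    using F.Radon_Nikodym[OF ac] sM snu by auto
  have hb[measurable]: "h \<in> borel_measurable borel" using hm snu measurable_cong_sets by blast
  have eM: "emeasure M A = (\<integral>\<^sup>+x. h x * indicator A x \<partial>\<nu>)" if "A \<in> sets borel" for A
    using that hM[symmetric] hm snu by (simp add: emeasure_density)
  have nuA: "(\<integral>\<^sup>+x. ennreal c * indicator A x \<partial>\<nu>) = ennreal c * emeasure \<nu> A" if "A \<in> sets borel" for A c
    using that snu by (simp add: nn_integral_cmult_indicator)
  have AEup: "AE x in \<nu>. h x \<le> ennreal q"
  proof -
    define A where "A = {x. ennreal q < h x}"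
    have A: "A \<in> sets borel" unfolding A_def by measurable
    have "AE x in \<nu>. h x * indicator A x \<le> ennreal q * indicator A x"
    proof (rule ccontr)
      assume "\<not> ?thesis"
      then have "(\<integral>\<^sup>+x. ennreal q * indicator A x \<partial>\<nu>) < (\<integral>\<^sup>+x. h x * indicator A x \<partial>\<nu>)"
        apply (intro nn_integral_less)
        using A snu apply (auto simp: nuA F.emeasure_finite ennreal_mult_eq_top_iff)
        by (auto simp: A_def indicator_def intro!: AE_I2 less_imp_le)
      then show False using hi[OF A] eM[OF A] nuA[OF A] by (simp add: \<nu>_def)
    qed
    then show ?thesis
      apply eventually_elim
      subgoal for x by (cases "ennreal q < h x") (auto simp: A_def indicator_def)
      done
  qed
  have AElo: "AE x in \<nu>. ennreal p \<le> h x"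
  proof -
    define A where "A = {x. h x < ennreal p}"
    have A: "A \<in> sets borel" unfolding A_def by measurable
    have "AE x in \<nu>. ennreal p * indicator A x \<le> h x * indicator A x"
    proof (rule ccontr)
      assume "\<not> ?thesis"
      then have "(\<integral>\<^sup>+x. h x * indicator A x \<partial>\<nu>) < (\<integral>\<^sup>+x. ennreal p * indicator A x \<partial>\<nu>)"
        apply (intro nn_integral_less)
        using A snu eM[OF A] FM.emeasure_finite[of A] apply (auto simp: sM)
        by (auto simp: A_def indicator_def intro!: AE_I2 less_imp_le)
      then show False using lo[OF A] eM[OF A] nuA[OF A] by (simp add: \<nu>_def)
    qed
    then show ?thesis
      apply eventually_elim
      subgoal for x by (cases "h x < ennreal p") (auto simp: A_def indicator_def)
      done
  qed
  define k where "k x = max p (min q (enn2real (h x)))" for x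
  have kb[measurable]: "k \<in> borel_measurable borel" unfolding k_def by measurable
  have AEk: "AE x in \<nu>. h x = ennreal (k x)"
    using AEup AElo
  proof eventually_elim
    case (elim x)
    obtain r where r: "h x = ennreal r" "0 \<le> r"
      using elim(1) p pq le_ennreal_iff[of q "h x"] by auto
    have "ennreal p \<le> ennreal r" "ennreal r \<le> ennreal q" using elim r(1) by auto
    then have "p \<le> r" "r \<le> q" using ennreal_le_iff[OF r(2), of p] ennreal_le_iff[of q r] p pq by auto
    then show ?case using r by (simp add: k_def)
  qed
  define g where "g x = m x * k x" for x
  have gb: "g \<in> borel_measurable borel" unfolding g_def using mb by measurable
  have "M = density \<nu> h" using hM by simp
  also have "\<dots> = density \<nu> (\<lambda>x. ennreal (k x))"
    apply (rule density_cong[OF hm _ AEk])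
    unfolding measurable_cong_sets[OF snu refl] by measurable
  also have "\<dots> = density lborel (\<lambda>x. ennreal (m x) * ennreal (k x))"
    unfolding \<nu>_def using mb by (intro density_density_eq) auto
  also have "\<dots> = density lborel (\<lambda>x. ennreal (g x))"
    using mpos by (simp add: g_def ennreal_mult' less_imp_le)
  finally have "M = density lborel (\<lambda>x. ennreal (g x))" .
  moreover have "p * m x \<le> g x \<and> g x \<le> q * m x" for x
    using mpos[of x] pq unfolding g_def k_def
    by (auto simp: mult.commute intro!: mult_right_mono)
  ultimately show ?thesis using gb by blast
qed



lemma sl_sym: "((p::real) - q) / (x - y) = (q - p) / (y - x)"
  by (metis minus_diff_eq minus_divide_divide)

lemma slope_mono:
  fixes f :: "real \<Rightarrow> real"
  assumes f: "convex_on UNIV f" and ab: "a < b" and cd: "c < d" and ac: "a \<le> c" and bd: "b \<le> d"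
  shows "(f b - f a) / (b - a) \<le> (f d - f c) / (d - c)"
proof -
  have s1: "(f b - f a) / (b - a) \<le> (f d - f a) / (d - a)"
  proof (cases "b = d")
    case False
    then have "b < d" using bd by simp
    from convex_on_slope_le(1)[OF f _ _ ab this] show ?thesis
      by (simp only: sl_sym[of "f a"]) simp
  qed simp
  have s2: "(f d - f a) / (d - a) \<le> (f d - f c) / (d - c)"
  proof (cases "a = c")
    case False
    then have "a < c" using ac by simp
    from convex_on_slope_le(2)[OF f _ _ this cd] show ?thesis
      by (simp only: sl_sym[of "f a"] sl_sym[of "f c"]) simp
  qed simp
  from s1 s2 show ?thesis by linarith
qed

lemma measure_density_compare:
  fixes w1 w2 :: "real \<Rightarrow> real"
  assumes w1: "w1 \<in> borel_measurable borel" and w2: "w2 \<in> borel_measurable borel" and A: "A \<in> sets borel"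
    and b: "\<And>x. w1 x \<le> k * w2 x" and k: "0 \<le> k"
    and f1: "finite_measure (density lborel (\<lambda>x. ennreal (w1 x)))"
    and f2: "finite_measure (density lborel (\<lambda>x. ennreal (w2 x)))"
  shows "measure (density lborel (\<lambda>x. ennreal (w1 x))) A \<le> k * measure (density lborel (\<lambda>x. ennreal (w2 x))) A"
proof -
  have "ennreal (measure (density lborel (\<lambda>x. ennreal (w1 x))) A) \<le> ennreal k * ennreal (measure (density lborel (\<lambda>x. ennreal (w2 x))) A)"
    using emeasure_density_compare[OF w1 w2 A b k]
    by (simp add: finite_measure.emeasure_eq_measure[OF f1] finite_measure.emeasure_eq_measure[OF f2])
  then show ?thesis using k by (simp add: ennreal_mult'[symmetric] ennreal_le_iff)
qed

lemma measure_density_interval: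
  fixes w :: "real \<Rightarrow> real"
  assumes w: "w \<in> borel_measurable borel" and ab: "a \<le> b"
    and bnd: "\<And>x. a < x \<Longrightarrow> x \<le> b \<Longrightarrow> lo \<le> w x \<and> w x \<le> hi" and lo: "0 \<le> lo"
    and f: "finite_measure (density lborel (\<lambda>x. ennreal (w x)))"
  shows "lo * (b - a) \<le> measure (density lborel (\<lambda>x. ennreal (w x))) {a<..b}"
    and "measure (density lborel (\<lambda>x. ennreal (w x))) {a<..b} \<le> hi * (b - a)"
proof -
  have A: "{a<..b} \<in> sets borel" by simp
  have e: "emeasure (density lborel (\<lambda>x. ennreal (w x))) {a<..b} = ennreal (measure (density lborel (\<lambda>x. ennreal (w x))) {a<..b})"
    using finite_measure.emeasure_eq_measure[OF f] by simp
  note b1 = emeasure_density_bounds(1)[OF w A _ lo, of hi] and b2 = emeasure_density_bounds(2)[OF w A _ lo, of hi]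
  have "ennreal (lo * (b - a)) \<le> ennreal (measure (density lborel (\<lambda>x. ennreal (w x))) {a<..b})"
    using b1 bnd ab lo e by (simp add: ennreal_mult')
  then show "lo * (b - a) \<le> measure (density lborel (\<lambda>x. ennreal (w x))) {a<..b}"
    by (simp add: ennreal_le_iff)
  show "measure (density lborel (\<lambda>x. ennreal (w x))) {a<..b} \<le> hi * (b - a)"
  proof (cases "a = b")
    case False
    then have "0 \<le> hi" using bnd[of b] ab lo by auto
    then have "ennreal (measure (density lborel (\<lambda>x. ennreal (w x))) {a<..b}) \<le> ennreal (hi * (b - a))"
      using b2 bnd ab lo e by (simp add: ennreal_mult')
    then show ?thesis using \<open>0 \<le> hi\<close> ab by (simp add: ennreal_le_iff)
  qed simp
qed




locale LC =
  fixes V :: "real \<Rightarrow> real" and L :: real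
  assumes cvx: "convex_on UNIV V" and lip: "L-lipschitz_on UNIV V"
    and prob: "prob_space (density lborel (\<lambda>x. ennreal (exp (- V x))))"
begin

abbreviation m where "m \<equiv> (\<lambda>x. exp (- V x))"
abbreviation nu where "nu \<equiv> density lborel (\<lambda>x. ennreal (m x))"

lemma L_nonneg: "0 \<le> L" using lip by (simp add: lipschitz_on_def)

lemma V_lip: "\<bar>V x - V y\<bar> \<le> L * \<bar>x - y\<bar>"
  using lip by (simp add: lipschitz_on_def dist_real_def)

lemma m_pos: "0 < m x" by simp

lemma m_ratio: "m x \<le> m y * exp (L * \<bar>x - y\<bar>)"
proof -
  have "m x = m y * exp (V y - V x)" by (simp add: exp_add[symmetric])
  also have "\<dots> \<le> m y * exp (L * \<bar>x - y\<bar>)"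
    using V_lip[of y x] by (intro mult_left_mono) (auto simp: abs_minus_commute)
  finally show ?thesis .
qed

lemma V_cont: "continuous_on UNIV V"
  by (rule lipschitz_on_continuous_on[OF lip])

lemma m_cont: "continuous_on UNIV m"
  using V_cont by (intro continuous_intros)

lemma m_borel[measurable]: "m \<in> borel_measurable borel"
  using m_cont by (rule borel_measurable_continuous_onI)

lemma V_borel[measurable]: "V \<in> borel_measurable borel"
  using V_cont by (rule borel_measurable_continuous_onI)

lemma nu_rd: "real_distribution nu"
  using prob by (simp add: real_distribution_def real_distribution_axioms_def)

sublocale N: real_distribution nu by (rule nu_rd)

lemma nu_fin: "finite_measure nu" by (rule N.finite_measure_axioms)

lemma Fm_eq: "cdf_of m x = cdf nu x" by (simp add: cdf_of_def cdf_def)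

lemma Fm_diff: "a \<le> b \<Longrightarrow> cdf_of m b - cdf_of m a = measure nu {a<..b}"
  using N.cdf_diff_eq[of a b] by (cases "a = b") (auto simp: Fm_eq)

lemma m_interval:
  assumes ab: "a \<le> b" and r: "b - a \<le> r"
  shows "m a * exp (- (L * r)) * (b - a) \<le> cdf_of m b - cdf_of m a"
    and "cdf_of m b - cdf_of m a \<le> m a * exp (L * r) * (b - a)"
proof -
  have bnd: "m a * exp (- (L * r)) \<le> m x \<and> m x \<le> m a * exp (L * r)" if "a < x" "x \<le> b" for x
  proof
    have "L * \<bar>x - a\<bar> \<le> L * r" using that r L_nonneg by (intro mult_left_mono) auto
    then have e: "m a * exp (L * \<bar>x - a\<bar>) \<le> m a * exp (L * r)" "m x * exp (L * \<bar>x - a\<bar>) \<le> m x * exp (L * r)"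
      by (intro mult_left_mono; simp add: less_imp_le)+
    show "m x \<le> m a * exp (L * r)"
      using m_ratio[of x a] e(1) by linarith
    have "m a \<le> m x * exp (L * r)"
      using m_ratio[of a x] e(2) unfolding abs_minus_commute[of a x] by linarith
    then show "m a * exp (- (L * r)) \<le> m x"
      by (simp add: exp_minus field_simps)
  qed
  show "m a * exp (- (L * r)) * (b - a) \<le> cdf_of m b - cdf_of m a"
    using measure_density_interval(1)[OF m_borel ab bnd _ nu_fin] Fm_diff[OF ab] by simp
  show "cdf_of m b - cdf_of m a \<le> m a * exp (L * r) * (b - a)"
    using measure_density_interval(2)[OF m_borel ab bnd _ nu_fin] Fm_diff[OF ab] by simp
qed


lemma exists_up: "\<exists>p q. p < q \<and> V p < V q"
proof (rule ccontr)
  assume "\<not> ?thesis"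
  then have H: "V q \<le> V p" if "p < q" for p q using that by (meson not_le)
  define b where "b = 2 / m 0"
  have b: "0 < b" by (simp add: b_def)
  have "m 0 * (b - 0) \<le> measure nu {0<..b}"
    apply (rule measure_density_interval(1)[OF m_borel _ _ _ nu_fin, of 0 b "m 0" "m 0 * exp (L * b)"])
    using b apply simp
    subgoal for x using H[of 0 x] m_ratio[of x 0] L_nonneg
      by (auto intro!: order_trans[OF m_ratio[of x 0]] mult_left_mono simp: less_imp_le)
    by simp
  moreover have "m 0 * b = 2" by (simp add: b_def)
  moreover have "measure nu {0<..b} \<le> 1" by (rule N.prob_le_1)
  ultimately show False by simp
qed

lemma exists_down: "\<exists>p q. p < q \<and> V q < V p"
proof (rule ccontr)
  assume "\<not> ?thesis"
  then have H: "V p \<le> V q" if "p < q" for p q using that by (meson not_le)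
  define b where "b = 2 / m 0"
  have b: "0 < b" by (simp add: b_def)
  have "m 0 * (0 - (-b)) \<le> measure nu {-b<..0}"
    apply (rule measure_density_interval(1)[OF m_borel _ _ _ nu_fin, of "-b" 0 "m 0" "m 0 * exp (L * b)"])
    using b apply simp
    subgoal for x using H[of x 0] m_ratio[of x 0] L_nonneg
      by (cases "x = 0") (auto intro!: order_trans[OF m_ratio[of x 0]] mult_left_mono simp: less_imp_le)
    by simp
  moreover have "m 0 * (0 - (-b)) = 2" by (simp add: b_def)
  moreover have "measure nu {-b<..0} \<le> 1" by (rule N.prob_le_1)
  ultimately show False by simp
qed

lemma right_decay:
  assumes pq: "p < q" "V p < V q" and qx: "q \<le> x" and xy: "x \<le> y"
  shows "measure nu {y<..} \<le> exp (- ((V q - V p) / (q - p) * (y - x))) * measure nu {x<..}"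
proof -
  define h where "h = (V q - V p) / (q - p)"
  define d where "d = y - x"
  have d: "0 \<le> d" using xy by (simp add: d_def)
  have Vs: "V s + h * d \<le> V (d + s)" if "x < s" for s
  proof (cases "d = 0")
    case False
    then have "0 < d" using d by simp
    have "h \<le> (V (d + s) - V s) / ((d + s) - s)"
      unfolding h_def using pq qx that \<open>0 < d\<close> by (intro slope_mono[OF cvx]) auto
    then show ?thesis using \<open>0 < d\<close> by (simp add: field_simps)
  qed simp
  have "emeasure nu {y<..} = (\<integral>\<^sup>+s. ennreal (m s) * indicator {y<..} s \<partial>lborel)"
    by (simp add: emeasure_density)
  also have "\<dots> = (\<integral>\<^sup>+s. ennreal (m (d + 1 * s)) * indicator {y<..} (d + 1 * s) \<partial>lborel)"
    by (subst nn_integral_real_affine[where c=1 and t=d]) auto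
  also have "\<dots> \<le> (\<integral>\<^sup>+s. ennreal (exp (- (h * d))) * (ennreal (m s) * indicator {x<..} s) \<partial>lborel)"
  proof (intro nn_integral_mono)
    fix s
    show "ennreal (m (d + 1 * s)) * indicator {y<..} (d + 1 * s) \<le> ennreal (exp (- (h * d))) * (ennreal (m s) * indicator {x<..} s)"
    proof (cases "x < s")
      case True
      then have "m (d + s) \<le> exp (- (h * d)) * m s"
        using Vs[OF True] by (simp add: exp_add[symmetric])
      then show ?thesis using True by (simp add: indicator_def d_def ennreal_mult'[symmetric] ennreal_leI)
    next
      case False
      then show ?thesis by (simp add: indicator_def d_def)
    qed
  qed
  also have "\<dots> = ennreal (exp (- (h * d))) * emeasure nu {x<..}"
    by (subst nn_integral_cmult) (auto simp: emeasure_density)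
  finally have "ennreal (measure nu {y<..}) \<le> ennreal (exp (- (h * d)) * measure nu {x<..})"
    by (simp add: N.emeasure_eq_measure ennreal_mult')
  then show ?thesis by (simp add: h_def d_def ennreal_le_iff)
qed

lemma left_decay:
  assumes pq: "p < q" "V q < V p" and yp: "y \<le> p" and xy: "x \<le> y"
  shows "measure nu {..x} \<le> exp (- ((V p - V q) / (q - p) * (y - x))) * measure nu {..y}"
proof -
  define h where "h = (V p - V q) / (q - p)"
  define d where "d = y - x"
  have d: "0 \<le> d" using xy by (simp add: d_def)
  have Vs: "V s + h * d \<le> V (- d + s)" if "s \<le> y" for s
  proof (cases "d = 0")
    case False
    then have "0 < d" using d by simp
    have "(V s - V (- d + s)) / (s - (- d + s)) \<le> (V q - V p) / (q - p)"
      using pq yp that \<open>0 < d\<close> by (intro slope_mono[OF cvx]) auto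
    then have "(V s - V (- d + s)) / d \<le> - h" by (simp add: h_def minus_divide_left)
    then show ?thesis using \<open>0 < d\<close> by (simp add: field_simps)
  qed simp
  have "emeasure nu {..x} = (\<integral>\<^sup>+s. ennreal (m s) * indicator {..x} s \<partial>lborel)"
    by (simp add: emeasure_density)
  also have "\<dots> = (\<integral>\<^sup>+s. ennreal (m (- d + 1 * s)) * indicator {..x} (- d + 1 * s) \<partial>lborel)"
    by (subst nn_integral_real_affine[where c=1 and t="-d"]) auto
  also have "\<dots> \<le> (\<integral>\<^sup>+s. ennreal (exp (- (h * d))) * (ennreal (m s) * indicator {..y} s) \<partial>lborel)"
  proof (intro nn_integral_mono)
    fix s
    show "ennreal (m (- d + 1 * s)) * indicator {..x} (- d + 1 * s) \<le> ennreal (exp (- (h * d))) * (ennreal (m s) * indicator {..y} s)"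
    proof (cases "s \<le> y")
      case True
      then have "m (- d + s) \<le> exp (- (h * d)) * m s"
        using Vs[OF True] by (simp add: exp_add[symmetric])
      then show ?thesis using True by (simp add: indicator_def d_def ennreal_mult'[symmetric] ennreal_leI)
    next
      case False
      then show ?thesis by (simp add: indicator_def d_def)
    qed
  qed
  also have "\<dots> = ennreal (exp (- (h * d))) * emeasure nu {..y}"
    by (subst nn_integral_cmult) (auto simp: emeasure_density)
  finally have "ennreal (measure nu {..x}) \<le> ennreal (exp (- (h * d)) * measure nu {..y})"
    by (simp add: N.emeasure_eq_measure ennreal_mult')
  then show ?thesis by (simp add: h_def d_def ennreal_le_iff)
qed

end


lemma quantile_cont:
  assumes rd: "real_distribution M" and cont: "\<And>x. isCont (cdf M) x" and u: "0 < u" "u < 1"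
  shows "cdf M (Inf {x. u \<le> cdf M x}) = u"
proof -
  interpret R: real_distribution M by (rule rd)
  define S where "S = {x. u \<le> cdf M x}"
  have "eventually (\<lambda>x. cdf M x > u) at_top"
    by (rule order_tendstoD(1)[OF R.cdf_lim_at_top_prob u(2)])
  then obtain N where N: "\<And>x. x \<ge> N \<Longrightarrow> cdf M x > u" by (auto simp: eventually_at_top_linorder)
  have ne: "S \<noteq> {}" using N[of N] by (auto simp: S_def intro!: exI[of _ N] less_imp_le)
  have "eventually (\<lambda>x. cdf M x < u) at_bot"
    by (rule order_tendstoD(2)[OF R.cdf_lim_at_bot u(1)])
  then obtain B where B: "\<And>x. x \<le> B \<Longrightarrow> cdf M x < u" by (auto simp: eventually_at_bot_linorder)
  have bdd: "bdd_below S"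
    unfolding S_def bdd_below_def by (rule exI[of _ B]) (meson B linorder_not_le mem_Collect_eq less_imp_le not_le)
  have cl: "closed S" unfolding S_def
    by (intro closed_Collect_le continuous_on_const) (simp add: continuous_at_imp_continuous_on cont)
  have zS: "Inf S \<in> S" by (rule closed_contains_Inf[OF ne bdd cl])
  have "cdf M (Inf S) \<le> u"
  proof (rule tendsto_upperbound)
    show "(cdf M \<longlongrightarrow> cdf M (Inf S)) (at_left (Inf S))"
      using cont[of "Inf S"] by (simp add: isCont_def filterlim_at_split)
    have ev: "eventually (\<lambda>x. x \<in> {Inf S - 1<..<Inf S}) (at_left (Inf S))"
      by (rule eventually_at_left_real) simp
    show "\<forall>\<^sub>F i in at_left (Inf S). cdf M i \<le> u"
    proof (rule eventually_mono[OF ev])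
      fix y assume "y \<in> {Inf S - 1<..<Inf S}"
      then have "y \<notin> S" using bdd cInf_lower[of y S] by auto
      then show "cdf M y \<le> u" by (simp add: S_def)
    qed
  qed simp
  with zS show ?thesis unfolding S_def by simp
qed

context LC begin

lemma Fm_pos: "0 < cdf_of m x"
proof -
  have "m (x - 1) * exp (- (L * 1)) * (x - (x - 1)) \<le> cdf_of m x - cdf_of m (x - 1)"
    by (rule m_interval(1)) auto
  moreover have "0 < m (x - 1) * exp (- (L * 1)) * (x - (x - 1))" by simp
  moreover have "0 \<le> cdf_of m (x - 1)" by (simp add: Fm_eq N.cdf_nonneg)
  ultimately show ?thesis by linarith
qed

lemma Fm_lt1: "cdf_of m x < 1"
proof -
  have "m x * exp (- (L * 1)) * ((x + 1) - x) \<le> cdf_of m (x + 1) - cdf_of m x"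
    by (rule m_interval(1)) auto
  moreover have "0 < m x * exp (- (L * 1)) * ((x + 1) - x)" by simp
  moreover have "cdf_of m (x + 1) \<le> 1" by (simp add: Fm_eq N.cdf_bounded_prob)
  ultimately show ?thesis by linarith
qed

lemma Fm_mono: "a \<le> b \<Longrightarrow> cdf_of m a \<le> cdf_of m b"
  by (simp add: Fm_eq N.cdf_nondecreasing)

lemma Gm_eq: "measure nu {x<..} = 1 - cdf_of m x"
proof -
  have "{x<..} = space nu - {..x}" by auto
  then show ?thesis using N.prob_compl[of "{..x}"] by (simp add: Fm_eq cdf_def)
qed

end

locale LF = LC +
  fixes c C :: real and f :: "real \<Rightarrow> real"
  assumes c: "0 < c" and cC: "c < C" and fP: "f \<in> Pab c C (\<lambda>x. exp (- V x))"
begin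

abbreviation nf where "nf \<equiv> density lborel (\<lambda>x. ennreal (f x))"
abbreviation T where "T \<equiv> ot_map m f"

lemma f_borel[measurable]: "f \<in> borel_measurable borel" using fP by (simp add: Pab_def)
lemma f_lo: "c * m x \<le> f x" using fP by (simp add: Pab_def)
lemma f_hi: "f x \<le> C * m x" using fP by (simp add: Pab_def)
lemma f_nonneg: "0 \<le> f x" using f_lo[of x] c m_pos[of x] by (smt (verit) mult_pos_pos)
lemma C_pos: "0 < C" using c cC by simp

lemma nf_rd: "real_distribution nf"
  using fP by (simp add: Pab_def real_distribution_def real_distribution_axioms_def)

sublocale NF: real_distribution nf by (rule nf_rd)

lemma nf_fin: "finite_measure nf" by (rule NF.finite_measure_axioms)

lemma nf_le: "A \<in> sets borel \<Longrightarrow> measure nf A \<le> C * measure nu A"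
  using measure_density_compare[OF f_borel m_borel _ f_hi _ nf_fin nu_fin] C_pos by simp

lemma nf_ge: "A \<in> sets borel \<Longrightarrow> c * measure nu A \<le> measure nf A"
proof -
  assume A: "A \<in> sets borel"
  have "m x \<le> (1 / c) * f x" for x using f_lo[of x] c by (simp add: field_simps)
  from measure_density_compare[OF m_borel f_borel A this _ nu_fin nf_fin] c
  show ?thesis by (simp add: field_simps)
qed

lemma Ff_eq: "cdf_of f x = cdf nf x" by (simp add: cdf_of_def cdf_def)

lemma Ff_diff: "a \<le> b \<Longrightarrow> cdf_of f b - cdf_of f a = measure nf {a<..b}"
  using NF.cdf_diff_eq[of a b] by (cases "a = b") (auto simp: Ff_eq)

lemma Ff_cont: "isCont (cdf nf) x"
proof -
  have "emeasure nf {x} \<le> ennreal (f x) * emeasure lborel {x}"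
    by (rule emeasure_density_bounds(2)[OF f_borel, of "{x}" 0]) (auto simp: f_nonneg)
  then have "emeasure nf {x} = 0" by simp
  then show ?thesis by (simp add: NF.isCont_cdf NF.emeasure_eq_measure)
qed

lemma Ff_strict: "a < b \<Longrightarrow> cdf_of f a < cdf_of f b"
proof -
  assume ab: "a < b"
  have "m a * exp (- (L * (b - a))) * (b - a) \<le> cdf_of m b - cdf_of m a"
    using ab by (intro m_interval(1)) auto
  moreover have "0 < m a * exp (- (L * (b - a))) * (b - a)" using ab by simp
  moreover have "c * measure nu {a<..b} \<le> measure nf {a<..b}" by (rule nf_ge) simp
  ultimately show ?thesis using Ff_diff[of a b] Fm_diff[of a b] ab c
    by (smt (verit, best) mult_pos_pos)
qed

lemma Ff_mono: "a \<le> b \<Longrightarrow> cdf_of f a \<le> cdf_of f b"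
  using Ff_strict[of a b] by (cases "a = b") auto

lemma T_eq: "cdf_of f (T x) = cdf_of m x"
  unfolding ot_map_def quantile_of_def Ff_eq
  using quantile_cont[OF nf_rd Ff_cont Fm_pos Fm_lt1] by (simp add: Ff_eq)

lemma T_mono: "a \<le> b \<Longrightarrow> T a \<le> T b"
  using T_eq[of a] T_eq[of b] Fm_mono[of a b] Ff_strict[of "T b" "T a"] by force

lemma Gf_eq: "measure nf {x<..} = 1 - cdf_of f x"
proof -
  have "{x<..} = space nf - {..x}" by auto
  then show ?thesis using NF.prob_compl[of "{..x}"] by (simp add: Ff_eq cdf_def)
qed

end


lemma arith1:
  fixes P kk h z :: real
  assumes "0 < P" "0 < kk" "0 < h" "kk * P \<le> exp (- (h * z)) * P"
  shows "z \<le> ln (1 / kk) / h"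
proof -
  have "kk \<le> exp (- (h * z))" using assms(1,4) by simp
  then have "ln kk \<le> - (h * z)" using assms(2) by (metis ln_exp ln_le_cancel_iff exp_gt_zero)
  then have "h * z \<le> ln (1 / kk)" using assms(2) by (simp add: ln_div)
  then show ?thesis using assms(3) by (simp add: field_simps)
qed

context LF begin

lemma Fm_le: "cdf_of m x = measure nu {..x}" by (simp add: cdf_of_def)
lemma Ff_le: "cdf_of f x = measure nf {..x}" by (simp add: cdf_of_def)

lemma Ff_bounds: "c * cdf_of m y \<le> cdf_of f y" "cdf_of f y \<le> C * cdf_of m y"
  using nf_ge[of "{..y}"] nf_le[of "{..y}"] by (auto simp: Fm_le Ff_le)

lemma Gf_bounds: "c * (1 - cdf_of m y) \<le> 1 - cdf_of f y" "1 - cdf_of f y \<le> C * (1 - cdf_of m y)"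
  using nf_ge[of "{y<..}"] nf_le[of "{y<..}"] by (auto simp: Gm_eq Gf_eq)

lemma dist_bound:
  assumes h: "0 < h"
   and R: "\<And>x y. x2 \<le> x \<Longrightarrow> x \<le> y \<Longrightarrow> measure nu {y<..} \<le> exp (- (h * (y - x))) * measure nu {x<..}"
   and Lf: "\<And>x y. x \<le> y \<Longrightarrow> y \<le> x1 \<Longrightarrow> measure nu {..x} \<le> exp (- (h * (y - x))) * measure nu {..y}"
  shows "\<bar>T x - x\<bar> \<le> \<bar>x2 - x1\<bar> + 2 * (ln (max C (1 / c)) / h)"
proof -
  define y where "y = T x"
  define B where "B = max C (1 / c)"
  define \<beta> where "\<beta> = ln B / h"
  have "ln (1 / c) \<le> ln (max C (1 / c))" using c C_pos by (subst ln_le_cancel_iff) auto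
  then have lc: "ln (1 / c) / h \<le> \<beta>" unfolding \<beta>_def B_def using c h
    by (intro divide_right_mono) auto
  have "ln (1 / (1 / C)) \<le> ln (max C (1 / c))" using c C_pos by (subst ln_le_cancel_iff) auto
  then have lC: "ln (1 / (1 / C)) / h \<le> \<beta>" unfolding \<beta>_def B_def using c cC h
    by (intro divide_right_mono) auto
  have B1: "1 \<le> max C (1 / c)"
  proof (cases "c \<le> 1")
    case True then show ?thesis using c by (simp add: le_max_iff_disj field_simps)
  next
    case False then show ?thesis using cC by (simp add: le_max_iff_disj)
  qed
  have b0: "0 \<le> \<beta>" unfolding \<beta>_def B_def using B1 h
    by (intro divide_nonneg_pos) auto
  have Gm: "measure nu {z<..} = 1 - cdf_of m z" for z by (rule Gm_eq)
  have Fpos: "0 < cdf_of m z" for z by (rule Fm_pos)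
  have Gpos: "0 < 1 - cdf_of m z" for z using Fm_lt1[of z] by simp
  have Fy: "cdf_of f y = cdf_of m x" unfolding y_def by (rule T_eq)
  note Fb = Ff_bounds[of y] and Gb = Gf_bounds[of y]
  have R': "1 - cdf_of m b \<le> exp (- (h * (b - a))) * (1 - cdf_of m a)" if "x2 \<le> a" "a \<le> b" for a b
    using R[OF that] by (simp add: Gm)
  have L': "cdf_of m a \<le> exp (- (h * (b - a))) * cdf_of m b" if "a \<le> b" "b \<le> x1" for a b
    using Lf[OF that] by (simp add: Fm_le)
  have up: "y - x \<le> \<bar>x2 - x1\<bar> + 2 * \<beta>" if yx: "x \<le> y"
  proof -
    have i: "min y x1 - x \<le> \<beta>" if "x < x1"
    proof -
      have "cdf_of m x \<le> exp (- (h * (min y x1 - x))) * cdf_of m (min y x1)"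
        using L'[of x "min y x1"] that yx by auto
      also have "\<dots> \<le> exp (- (h * (min y x1 - x))) * cdf_of m y"
        by (intro mult_left_mono Fm_mono) auto
      finally have "c * cdf_of m y \<le> exp (- (h * (min y x1 - x))) * cdf_of m y"
        using Fb Fy by linarith
      from arith1[OF Fpos c h this] lc show ?thesis by linarith
    qed
    have ii: "y - max x x2 \<le> \<beta>" if "x2 < y"
    proof -
      have "1 - cdf_of m y \<le> exp (- (h * (y - max x x2))) * (1 - cdf_of m (max x x2))"
        using R'[of "max x x2" y] that yx by auto
      also have "\<dots> \<le> exp (- (h * (y - max x x2))) * (1 - cdf_of m x)"
        using Fm_mono[of x "max x x2"] by (intro mult_left_mono) auto
      also have "\<dots> \<le> exp (- (h * (y - max x x2))) * (C * (1 - cdf_of m y))"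
        using Gb Fy by (intro mult_left_mono) auto
      finally have "1 - cdf_of m y \<le> C * (exp (- (h * (y - max x x2))) * (1 - cdf_of m y))"
        by (simp add: ac_simps)
      then have "(1 / C) * (1 - cdf_of m y) \<le> exp (- (h * (y - max x x2))) * (1 - cdf_of m y)"
        using C_pos by (simp add: field_simps)
      from arith1[OF Gpos _ h this] lC C_pos show ?thesis by simp
    qed
    show ?thesis
      using i ii b0 by (cases "x < x1"; cases "x2 < y"; simp add: min_def max_def split: if_splits; linarith)
  qed
  have down: "x - y \<le> \<bar>x2 - x1\<bar> + 2 * \<beta>" if yx: "y \<le> x"
  proof -
    have i: "min x x1 - y \<le> \<beta>" if "y < x1"
    proof -
      have "cdf_of m y \<le> exp (- (h * (min x x1 - y))) * cdf_of m (min x x1)"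
        using L'[of y "min x x1"] that yx by auto
      also have "\<dots> \<le> exp (- (h * (min x x1 - y))) * cdf_of m x"
        by (intro mult_left_mono Fm_mono) auto
      also have "\<dots> \<le> exp (- (h * (min x x1 - y))) * (C * cdf_of m y)"
        using Fb Fy by (intro mult_left_mono) auto
      finally have "cdf_of m y \<le> C * (exp (- (h * (min x x1 - y))) * cdf_of m y)"
        by (simp add: ac_simps)
      then have "(1 / C) * cdf_of m y \<le> exp (- (h * (min x x1 - y))) * cdf_of m y"
        using C_pos by (simp add: field_simps)
      from arith1[OF Fpos _ h this] lC C_pos show ?thesis by simp
    qed
    have ii: "x - max y x2 \<le> \<beta>" if "x2 < x"
    proof -
      have "1 - cdf_of m x \<le> exp (- (h * (x - max y x2))) * (1 - cdf_of m (max y x2))"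
        using R'[of "max y x2" x] that yx by auto
      also have "\<dots> \<le> exp (- (h * (x - max y x2))) * (1 - cdf_of m y)"
        using Fm_mono[of y "max y x2"] by (intro mult_left_mono) auto
      finally have "c * (1 - cdf_of m y) \<le> exp (- (h * (x - max y x2))) * (1 - cdf_of m y)"
        using Gb Fy by linarith
      from arith1[OF Gpos c h this] lc show ?thesis by linarith
    qed
    show ?thesis
      using i ii b0 by (cases "y < x1"; cases "x2 < x"; simp add: min_def max_def split: if_splits; linarith)
  qed
  show ?thesis using up down unfolding y_def \<beta>_def B_def by (cases "x \<le> T x") auto
qed

end


definition EE :: "real \<Rightarrow> real \<Rightarrow> real" where "EE L D = exp (L * (3 * D + 1))"
definition ka1 :: "real \<Rightarrow> real \<Rightarrow> real \<Rightarrow> real" where "ka1 L C D = 1 / (exp L * C * EE L D)"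
definition ka2 :: "real \<Rightarrow> real \<Rightarrow> real \<Rightarrow> real" where "ka2 L c D = EE L D * exp L / c"
definition la1 where "la1 L C D = min 1 (ka1 L C D)"
definition la2 where "la2 L c D = max 1 (ka2 L c D)"
definition KK where "KK L c D = exp (L * (D + la2 L c D + 1)) * la2 L c D"
definition kk where "kk L c C D = exp (- (L * (D + la2 L c D + 1))) * la1 L C D"

lemma mono_from_local:
  fixes \<phi> :: "real \<Rightarrow> real"
  assumes loc: "\<And>a b. a \<le> b \<Longrightarrow> b \<le> a + 1 \<Longrightarrow> \<phi> a \<le> \<phi> b" and ab: "a \<le> b"
  shows "\<phi> a \<le> \<phi> b"
proof -
  have "\<forall>a b. a \<le> b \<longrightarrow> b \<le> a + real n \<longrightarrow> \<phi> a \<le> \<phi> b" for n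
  proof (induction n)
    case 0 then show ?case by auto
  next
    case (Suc n)
    show ?case
    proof (intro allI impI)
      fix a b :: real assume "a \<le> b" "b \<le> a + real (Suc n)"
      show "\<phi> a \<le> \<phi> b"
      proof (cases "b \<le> a + 1")
        case True then show ?thesis using loc \<open>a \<le> b\<close> by auto
      next
        case False
        then have "\<phi> (a + 1) \<le> \<phi> b" using Suc.IH \<open>b \<le> a + real (Suc n)\<close> by auto
        moreover have "\<phi> a \<le> \<phi> (a + 1)" using loc by auto
        ultimately show ?thesis by linarith
      qed
    qed
  qed
  moreover have "b \<le> a + real (nat \<lceil>b - a\<rceil>)" by linarith
  ultimately show ?thesis using ab by blast
qed

context LF begin

lemma T_local:
  assumes D: "\<And>x. \<bar>T x - x\<bar> \<le> D" and ab: "a \<le> b" "b \<le> a + 1"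
  shows "ka1 L C D * (b - a) \<le> T b - T a" and "T b - T a \<le> ka2 L c D * (b - a)"
proof -
  define \<Delta> where "\<Delta> = b - a"
  define \<tau> where "\<tau> = T b - T a"
  define A where "A = m a"
  define \<Delta>\<nu> where "\<Delta>\<nu> = cdf_of m b - cdf_of m a"
  have A: "0 < A" by (simp add: A_def)
  have D0: "0 \<le> D" using D[of 0] by linarith
  have \<tau>0: "0 \<le> \<tau>" using T_mono[OF ab(1)] by (simp add: \<tau>_def)
  have \<tau>1: "\<tau> \<le> 2 * D + 1" using D[of a] D[of b] ab by (simp add: \<tau>_def abs_le_iff)
  have d1: "A * exp (- L) * \<Delta> \<le> \<Delta>\<nu>" using m_interval(1)[OF ab(1), of 1] ab by (simp add: A_def \<Delta>_def \<Delta>\<nu>_def)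
  have d2: "\<Delta>\<nu> \<le> A * exp L * \<Delta>" using m_interval(2)[OF ab(1), of 1] ab by (simp add: A_def \<Delta>_def \<Delta>\<nu>_def)
  have eqf: "\<Delta>\<nu> = measure nf {T a<..T b}"
    using Ff_diff[OF T_mono[OF ab(1)]] T_eq[of a] T_eq[of b] by (simp add: \<Delta>\<nu>_def)
  have Fmdiff: "cdf_of m (T b) - cdf_of m (T a) = measure nu {T a<..T b}" by (rule Fm_diff[OF T_mono[OF ab(1)]])
  have f1: "\<Delta>\<nu> \<le> C * (cdf_of m (T b) - cdf_of m (T a))" using nf_le[of "{T a<..T b}"] eqf Fmdiff by simp
  have f2: "c * (cdf_of m (T b) - cdf_of m (T a)) \<le> \<Delta>\<nu>" using nf_ge[of "{T a<..T b}"] eqf Fmdiff by simp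
  have g1: "cdf_of m (T b) - cdf_of m (T a) \<le> m (T a) * exp (L * (2 * D + 1)) * \<tau>"
    using m_interval(2)[OF T_mono[OF ab(1)], of "2 * D + 1"] \<tau>1 by (simp add: \<tau>_def)
  have g2: "m (T a) * exp (- (L * (2 * D + 1))) * \<tau> \<le> cdf_of m (T b) - cdf_of m (T a)"
    using m_interval(1)[OF T_mono[OF ab(1)], of "2 * D + 1"] \<tau>1 by (simp add: \<tau>_def)
  have LD: "L * \<bar>T a - a\<bar> \<le> L * D" using D[of a] L_nonneg by (intro mult_left_mono) auto
  have mT1: "m (T a) \<le> A * exp (L * D)"
    using m_ratio[of "T a" a] LD A by (smt (verit, best) A_def exp_le_cancel_iff mult_left_mono)
  have mT2: "A \<le> m (T a) * exp (L * D)"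
    using m_ratio[of a "T a"] LD by (smt (verit, best) abs_minus_commute exp_le_cancel_iff m_pos mult_left_mono A_def)
  have E: "EE L D = exp (L * D) * exp (L * (2 * D + 1))" by (simp add: EE_def exp_add[symmetric] algebra_simps)
  have "A * exp (- L) * \<Delta> \<le> C * (m (T a) * exp (L * (2 * D + 1)) * \<tau>)"
    using d1 f1 g1 C_pos by (smt (verit) mult_left_mono)
  also have "\<dots> \<le> C * (A * exp (L * D) * exp (L * (2 * D + 1)) * \<tau>)"
    using mT1 \<tau>0 C_pos by (intro mult_left_mono mult_right_mono) auto
  also have "\<dots> = A * (C * EE L D * \<tau>)" by (simp add: E ac_simps)
  finally have "exp (- L) * \<Delta> \<le> C * EE L D * \<tau>" using A by (simp add: mult.assoc)
  then have "\<Delta> \<le> exp L * C * EE L D * \<tau>" by (simp add: exp_minus field_simps)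
  then show "ka1 L C D * (b - a) \<le> T b - T a"
    using C_pos by (simp add: ka1_def EE_def field_simps \<Delta>_def \<tau>_def)
  have "c * (A * exp (- (L * D)) * exp (- (L * (2 * D + 1))) * \<tau>) \<le> c * (m (T a) * exp (- (L * (2 * D + 1))) * \<tau>)"
    using mT2 \<tau>0 c by (intro mult_left_mono mult_right_mono) (auto simp: exp_minus field_simps)
  also have "\<dots> \<le> \<Delta>\<nu>" using f2 g2 c by (smt (verit) mult_left_mono)
  also have "\<dots> \<le> A * exp L * \<Delta>" by (rule d2)
  finally have "c * (exp (- (L * D)) * exp (- (L * (2 * D + 1))) * \<tau>) \<le> exp L * \<Delta>"
    using A by (simp add: ac_simps)
  then have h1: "c * (inverse (exp (L * D)) * inverse (exp (L * (2 * D + 1))) * \<tau>) \<le> exp L * \<Delta>"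
    by (simp add: exp_minus)
  have "c * \<tau> = (c * (inverse (exp (L * D)) * inverse (exp (L * (2 * D + 1))) * \<tau>)) * (exp (L * D) * exp (L * (2 * D + 1)))"
    by (simp add: field_simps)
  also have "\<dots> \<le> (exp L * \<Delta>) * (exp (L * D) * exp (L * (2 * D + 1)))"
    using h1 by (intro mult_right_mono) auto
  also have "\<dots> = EE L D * exp L * \<Delta>" by (simp add: E ac_simps)
  finally have "c * \<tau> \<le> EE L D * exp L * \<Delta>" .
  then show "T b - T a \<le> ka2 L c D * (b - a)"
    using c by (simp add: ka2_def field_simps \<Delta>_def \<tau>_def)
qed

end


lemma la_facts:
  fixes L c C D :: real
  assumes "0 < C"
  shows "0 < la1 L C D \<and> la1 L C D \<le> 1 \<and> la1 L C D \<le> ka1 L C D \<and> 1 \<le> la2 L c D \<and> ka2 L c D \<le> la2 L c D"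
  using assms by (auto simp: la1_def la2_def ka1_def EE_def)

context LF begin

abbreviation Sm where "Sm t \<equiv> (\<lambda>x. (1 - t) * x + t * T x)"

lemma S_local:
  assumes D: "\<And>x. \<bar>T x - x\<bar> \<le> D" and t: "0 \<le> t" "t \<le> 1" and ab: "a \<le> b" "b \<le> a + 1"
  shows "la1 L C D * (b - a) \<le> Sm t b - Sm t a" and "Sm t b - Sm t a \<le> la2 L c D * (b - a)"
proof -
  note T1 = T_local(1)[OF D ab] and T2 = T_local(2)[OF D ab]
  have lf: "0 < la1 L C D" "la1 L C D \<le> 1" "la1 L C D \<le> ka1 L C D" "1 \<le> la2 L c D" "ka2 L c D \<le> la2 L c D" using la_facts[where L=L and c=c and C=C and D=D, OF C_pos] by auto
  have eq: "Sm t b - Sm t a = (1 - t) * (b - a) + t * (T b - T a)" by (simp add: algebra_simps)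
  have "la1 L C D * (b - a) = (1 - t) * (la1 L C D * (b - a)) + t * (la1 L C D * (b - a))" by (simp add: algebra_simps)
  also have "\<dots> \<le> (1 - t) * (b - a) + t * (T b - T a)"
  proof (intro add_mono mult_left_mono)
    show "la1 L C D * (b - a) \<le> b - a" using lf ab by (intro mult_left_le_one_le) auto
    show "la1 L C D * (b - a) \<le> T b - T a" using T1 lf ab by (meson diff_ge_0_iff_ge mult_right_mono order_trans)
  qed (use t in auto)
  finally show "la1 L C D * (b - a) \<le> Sm t b - Sm t a" using eq by simp
  have "(1 - t) * (b - a) + t * (T b - T a) \<le> (1 - t) * (la2 L c D * (b - a)) + t * (la2 L c D * (b - a))"
  proof (intro add_mono mult_left_mono)
    show "b - a \<le> la2 L c D * (b - a)" using lf ab mult_right_mono[of 1 "la2 L c D" "b - a"] by simp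
    show "T b - T a \<le> la2 L c D * (b - a)" using T2 lf ab by (meson diff_ge_0_iff_ge mult_right_mono order_trans)
  qed (use t in auto)
  also have "\<dots> = la2 L c D * (b - a)" by (simp add: algebra_simps)
  finally show "Sm t b - Sm t a \<le> la2 L c D * (b - a)" using eq by simp
qed

lemma cmp_local:
  assumes D: "\<And>x. \<bar>T x - x\<bar> \<le> D" and t: "0 \<le> t" "t \<le> 1" and ab: "a \<le> b" "b \<le> a + 1"
  shows "kk L c C D * (cdf_of m b - cdf_of m a) \<le> cdf_of m (Sm t b) - cdf_of m (Sm t a)"
    and "cdf_of m (Sm t b) - cdf_of m (Sm t a) \<le> KK L c D * (cdf_of m b - cdf_of m a)"
proof -
  define A where "A = m a"
  define \<Delta> where "\<Delta> = b - a"
  define s where "s = Sm t b - Sm t a"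
  define \<Delta>\<nu> where "\<Delta>\<nu> = cdf_of m b - cdf_of m a"
  define l1 where "l1 = la1 L C D"
  define l2 where "l2 = la2 L c D"
  note lf = la_facts[OF C_pos, of L D c, folded l1_def l2_def]
  have A: "0 < A" by (simp add: A_def)
  have \<Delta>: "0 \<le> \<Delta>" "\<Delta> \<le> 1" using ab by (auto simp: \<Delta>_def)
  have s1: "l1 * \<Delta> \<le> s" and s2: "s \<le> l2 * \<Delta>"
    using S_local[OF D t ab] by (auto simp: s_def l1_def l2_def \<Delta>_def)
  have "0 \<le> l1 * \<Delta>" using lf \<Delta> by simp
  then have s0: "0 \<le> s" using s1 by linarith
  have "l2 * \<Delta> \<le> l2" using \<Delta> lf by (intro mult_left_le) auto
  then have sl2: "s \<le> l2" using s2 by linarith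
  have ex: "exp (L * (D + l2 + 1)) = exp (L * D) * exp (L * l2) * exp L"
    by (simp add: distrib_left exp_add)
  have Sab: "Sm t a \<le> Sm t b" using s0 by (simp add: s_def)
  have d1: "A * exp (- L) * \<Delta> \<le> \<Delta>\<nu>" using m_interval(1)[OF ab(1), of 1] ab by (simp add: A_def \<Delta>_def \<Delta>\<nu>_def)
  have d2: "\<Delta>\<nu> \<le> A * exp L * \<Delta>" using m_interval(2)[OF ab(1), of 1] ab by (simp add: A_def \<Delta>_def \<Delta>\<nu>_def)
  have g1: "cdf_of m (Sm t b) - cdf_of m (Sm t a) \<le> m (Sm t a) * exp (L * l2) * s"
    using m_interval(2)[OF Sab, of l2] sl2 by (simp add: s_def)
  have g2: "m (Sm t a) * exp (- (L * l2)) * s \<le> cdf_of m (Sm t b) - cdf_of m (Sm t a)"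
    using m_interval(1)[OF Sab, of l2] sl2 by (simp add: s_def)
  have "Sm t a - a = t * (T a - a)" by (simp add: algebra_simps)
  then have "\<bar>Sm t a - a\<bar> = t * \<bar>T a - a\<bar>" using t by (simp add: abs_mult)
  also have "\<dots> \<le> D" using D[of a] t by (smt (verit) mult_left_le_one_le abs_ge_zero)
  finally have SD: "\<bar>Sm t a - a\<bar> \<le> D" .
  have LD: "L * \<bar>Sm t a - a\<bar> \<le> L * D" using SD L_nonneg by (intro mult_left_mono) auto
  have mS1: "m (Sm t a) \<le> A * exp (L * D)"
    using m_ratio[of "Sm t a" a] LD A by (smt (verit, best) A_def exp_le_cancel_iff mult_left_mono)
  have mS2: "A \<le> m (Sm t a) * exp (L * D)"
    using m_ratio[of a "Sm t a"] LD by (smt (verit, best) abs_minus_commute exp_le_cancel_iff m_pos mult_left_mono A_def)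
  have "cdf_of m (Sm t b) - cdf_of m (Sm t a) \<le> m (Sm t a) * exp (L * l2) * s" by (rule g1)
  also have "\<dots> \<le> (A * exp (L * D)) * exp (L * l2) * (l2 * \<Delta>)"
    using mS1 s2 s0 A by (intro mult_mono) auto
  also have "\<dots> = exp (L * D) * exp (L * l2) * l2 * (A * \<Delta>)" by (simp add: ac_simps)
  also have "\<dots> \<le> exp (L * D) * exp (L * l2) * l2 * (exp L * \<Delta>\<nu>)"
  proof (intro mult_left_mono)
    have "A * \<Delta> = exp L * (A * exp (- L) * \<Delta>)" by (simp add: exp_minus field_simps)
    also have "\<dots> \<le> exp L * \<Delta>\<nu>" using d1 by (intro mult_left_mono) auto
    finally show "A * \<Delta> \<le> exp L * \<Delta>\<nu>" .
  qed (use lf in auto)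
  also have "\<dots> = KK L c D * \<Delta>\<nu>"
    unfolding KK_def l2_def[symmetric] ex by (simp add: ac_simps)
  finally have "cdf_of m (Sm t b) - cdf_of m (Sm t a) \<le> KK L c D * \<Delta>\<nu>" .
  then show "cdf_of m (Sm t b) - cdf_of m (Sm t a) \<le> KK L c D * (cdf_of m b - cdf_of m a)"
    by (simp only: \<Delta>\<nu>_def)
  have "kk L c C D * \<Delta>\<nu> = inverse (exp (L * D)) * inverse (exp (L * l2)) * l1 * (inverse (exp L) * \<Delta>\<nu>)"
    unfolding kk_def l1_def[symmetric] l2_def[symmetric] exp_minus ex by (simp add: ac_simps)
  also have "\<dots> \<le> inverse (exp (L * D)) * inverse (exp (L * l2)) * l1 * (A * \<Delta>)"
  proof (intro mult_left_mono)
    have "inverse (exp L) * \<Delta>\<nu> \<le> inverse (exp L) * (A * exp L * \<Delta>)" using d2 by (intro mult_left_mono) auto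
    also have "\<dots> = A * \<Delta>" by simp
    finally show "inverse (exp L) * \<Delta>\<nu> \<le> A * \<Delta>" .
  qed (use lf in auto)
  also have "\<dots> = (A * inverse (exp (L * D))) * inverse (exp (L * l2)) * (l1 * \<Delta>)" by (simp add: ac_simps)
  also have "\<dots> \<le> m (Sm t a) * inverse (exp (L * l2)) * s"
  proof (intro mult_mono)
    show "A * inverse (exp (L * D)) \<le> m (Sm t a)" using mS2 by (simp add: field_simps)
  qed (use s1 lf \<Delta> in auto)
  also have "\<dots> \<le> cdf_of m (Sm t b) - cdf_of m (Sm t a)" using g2 by (simp add: exp_minus)
  finally have "kk L c C D * \<Delta>\<nu> \<le> cdf_of m (Sm t b) - cdf_of m (Sm t a)" .
  then show "kk L c C D * (cdf_of m b - cdf_of m a) \<le> cdf_of m (Sm t b) - cdf_of m (Sm t a)"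
    by (simp only: \<Delta>\<nu>_def)
qed

lemma cmp_global:
  assumes D: "\<And>x. \<bar>T x - x\<bar> \<le> D" and t: "0 \<le> t" "t \<le> 1" and ab: "a \<le> b"
  shows "kk L c C D * (cdf_of m b - cdf_of m a) \<le> cdf_of m (Sm t b) - cdf_of m (Sm t a)"
    and "cdf_of m (Sm t b) - cdf_of m (Sm t a) \<le> KK L c D * (cdf_of m b - cdf_of m a)"
proof -
  define \<phi>1 where "\<phi>1 x = cdf_of m (Sm t x) - kk L c C D * cdf_of m x" for x
  define \<phi>2 where "\<phi>2 x = KK L c D * cdf_of m x - cdf_of m (Sm t x)" for x
  have l1: "\<phi>1 a' \<le> \<phi>1 b'" if "a' \<le> b'" "b' \<le> a' + 1" for a' b'
    using cmp_local(1)[OF D t that] unfolding \<phi>1_def right_diff_distrib by linarith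
  have l2: "\<phi>2 a' \<le> \<phi>2 b'" if "a' \<le> b'" "b' \<le> a' + 1" for a' b'
    using cmp_local(2)[OF D t that] unfolding \<phi>2_def right_diff_distrib by linarith
  show "kk L c C D * (cdf_of m b - cdf_of m a) \<le> cdf_of m (Sm t b) - cdf_of m (Sm t a)"
    using mono_from_local[of \<phi>1, OF l1 ab] unfolding \<phi>1_def right_diff_distrib by linarith
  show "cdf_of m (Sm t b) - cdf_of m (Sm t a) \<le> KK L c D * (cdf_of m b - cdf_of m a)"
    using mono_from_local[of \<phi>2, OF l2 ab] unfolding \<phi>2_def right_diff_distrib by linarith
qed

end


lemma KK_ge1: "0 \<le> L \<Longrightarrow> 0 \<le> D \<Longrightarrow> 0 < C \<Longrightarrow> 1 \<le> KK L c D"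
proof -
  assume L: "0 \<le> L" and D: "0 \<le> D" and C: "0 < C"
  have l2: "1 \<le> la2 L c D" by (simp add: la2_def)
  have "1 \<le> exp (L * (D + la2 L c D + 1))" using L D l2 by simp
  then show ?thesis unfolding KK_def using l2
    by (metis mult_mono' mult_1 zero_le_one)
qed

lemma kk_pos: "0 < C \<Longrightarrow> 0 < kk L c C D"
  using la_facts[where L=L and c=c and C=C and D=D] by (simp add: kk_def)

lemma kk_le1: "0 \<le> L \<Longrightarrow> 0 \<le> D \<Longrightarrow> 0 < C \<Longrightarrow> kk L c C D \<le> 1"
proof -
  assume L: "0 \<le> L" and D: "0 \<le> D" and C: "0 < C"
  have l: "0 < la1 L C D" "la1 L C D \<le> 1" "1 \<le> la2 L c D" using la_facts[where L=L and c=c and C=C and D=D] C by auto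
  have "exp (- (L * (D + la2 L c D + 1))) \<le> 1" using L D l by simp
  then show ?thesis unfolding kk_def using l
    by (metis mult_mono' mult_1 less_imp_le exp_ge_zero)
qed

context LC begin

lemma scaled_nu:
  assumes p: "0 \<le> p" and A: "A \<in> sets borel"
  shows "emeasure (density lborel (\<lambda>x. ennreal (p * m x))) A = ennreal p * emeasure nu A"
proof -
  have "emeasure (density lborel (\<lambda>x. ennreal (p * m x))) A = (\<integral>\<^sup>+x. ennreal p * (ennreal (m x) * indicator A x) \<partial>lborel)"
    using A p by (simp add: emeasure_density ennreal_mult mult.assoc)
  also have "\<dots> = ennreal p * emeasure nu A"
    using A by (subst nn_integral_cmult) (auto simp: emeasure_density)
  finally show ?thesis .
qed

lemma scaled_fin:
  assumes p: "0 \<le> p"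
  shows "finite_measure (density lborel (\<lambda>x. ennreal (p * m x)))"
proof (rule finite_measureI)
  have "emeasure (density lborel (\<lambda>x. ennreal (p * m x))) (space (density lborel (\<lambda>x. ennreal (p * m x)))) = ennreal p * emeasure nu UNIV"
    using scaled_nu[OF p, of UNIV] by simp
  then show "emeasure (density lborel (\<lambda>x. ennreal (p * m x))) (space (density lborel (\<lambda>x. ennreal (p * m x)))) \<noteq> \<infinity>"
    using N.emeasure_space_1 by (simp add: ennreal_mult_eq_top_iff)
qed

lemma scaled_measure:
  assumes p: "0 \<le> p" and A: "A \<in> sets borel"
  shows "measure (density lborel (\<lambda>x. ennreal (p * m x))) A = p * measure nu A"
  using scaled_nu[OF p A] p by (simp add: measure_def enn2real_mult)

end

context LF begin

lemma geo_density:
  assumes D: "\<And>x. \<bar>T x - x\<bar> \<le> D" and t: "0 \<le> t" "t \<le> 1"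
  shows "\<exists>g\<in>Pab (1 / KK L c D) (1 / kk L c C D + 1 / KK L c D) m. geodesic_pt m f t = density lborel (\<lambda>x. ennreal (g x))"
proof -
  define S where "S = Sm t"
  define p where "p = 1 / KK L c D"
  define q where "q = 1 / kk L c C D"
  have D0: "0 \<le> D" using D[of 0] by linarith
  have KK1: "1 \<le> KK L c D" by (rule KK_ge1[OF L_nonneg D0 C_pos])
  have kkp: "0 < kk L c C D" by (rule kk_pos[OF C_pos])
  have kk1: "kk L c C D \<le> 1" by (rule kk_le1[OF L_nonneg D0 C_pos])
  have p: "0 < p" "p \<le> 1" using KK1 by (auto simp: p_def)
  have q: "1 \<le> q" using kkp kk1 by (auto simp: q_def)
  have l2: "1 \<le> la2 L c D" by (simp add: la2_def)
  have l1: "0 < la1 L C D" using la_facts[where L=L and c=c and C=C and D=D] C_pos by auto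
  have Smono: "S a \<le> S b" if "a \<le> b" for a b
    unfolding S_def using T_mono[OF that] that t by (intro add_mono mult_left_mono) auto
  have Sstrict: "S a < S b" if "a < b" for a b
  proof -
    define b' where "b' = min b (a + 1)"
    have "la1 L C D * (b' - a) \<le> S b' - S a"
      unfolding S_def by (rule S_local(1)[OF D t]) (use that in \<open>auto simp: b'_def\<close>)
    moreover have "0 < la1 L C D * (b' - a)" using l1 that by (simp add: b'_def)
    moreover have "S b' \<le> S b" by (rule Smono) (simp add: b'_def)
    ultimately show ?thesis by linarith
  qed
  have Scont: "isCont S x" for x
    unfolding isCont_def LIM_eq
  proof (intro allI impI)
    fix r :: real assume r: "0 < r"
    define s where "s = min 1 (r / la2 L c D)"
    have s: "0 < s" using r l2 by (simp add: s_def)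
    have "\<bar>S y - S x\<bar> < r" if "\<bar>y - x\<bar> < s" for y
    proof -
      have "\<bar>S y - S x\<bar> \<le> la2 L c D * \<bar>y - x\<bar>"
      proof (cases "x \<le> y")
        case True
        then have "S y - S x \<le> la2 L c D * (y - x)"
          unfolding S_def using that by (intro S_local(2)[OF D t]) (auto simp: s_def)
        then show ?thesis using True Smono[OF True] by simp
      next
        case False
        then have "S x - S y \<le> la2 L c D * (x - y)"
          unfolding S_def using that by (intro S_local(2)[OF D t]) (auto simp: s_def)
        then show ?thesis using False Smono[of y x] by simp
      qed
      also have "\<dots> < la2 L c D * s" using that l2 by (intro mult_strict_left_mono) auto
      also have "\<dots> \<le> r" using l2 r by (simp add: s_def min_def field_simps)
      finally show ?thesis .
    qed
    then show "\<exists>s>0. \<forall>y. y \<noteq> x \<and> norm (y - x) < s \<longrightarrow> norm (S y - S x) < r" using s by auto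
  qed
  have SD: "\<bar>S x - x\<bar> \<le> D" for x
  proof -
    have "S x - x = t * (T x - x)" by (simp add: S_def algebra_simps)
    then have "\<bar>S x - x\<bar> = t * \<bar>T x - x\<bar>" using t by (simp add: abs_mult)
    also have "\<dots> \<le> D" using D[of x] t D0 by (metis abs_ge_zero mult_left_le_one_le order_trans)
    finally show ?thesis .
  qed
  have Ssurj: "\<exists>x. S x = y" for y
  proof -
    have "S (y - D) \<le> y" "y \<le> S (y + D)" using SD[of "y - D"] SD[of "y + D"] by (auto simp: abs_le_iff)
    then show ?thesis using IVT[of S "y - D" y "y + D"] Scont D0 by auto
  qed
  define \<sigma> where "\<sigma> y = (SOME x. S x = y)" for y
  have S\<sigma>: "S (\<sigma> y) = y" for y unfolding \<sigma>_def using Ssurj[of y] by (rule someI_ex)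
  have \<sigma>mono: "\<sigma> a \<le> \<sigma> b" if "a \<le> b" for a b
    using Sstrict[of "\<sigma> b" "\<sigma> a"] S\<sigma>[of a] S\<sigma>[of b] that by force
  have pre: "S -` {a<..b} = {\<sigma> a<..\<sigma> b}" for a b
  proof (rule set_eqI)
    fix x
    have h: "x \<le> \<sigma> a \<longrightarrow> S x \<le> a" "\<sigma> b < x \<longrightarrow> b < S x" "\<sigma> a < x \<longrightarrow> a < S x" "x \<le> \<sigma> b \<longrightarrow> S x \<le> b"
      using Smono[of x "\<sigma> a"] Sstrict[of "\<sigma> b" x] Sstrict[of "\<sigma> a" x] Smono[of x "\<sigma> b"] S\<sigma>[of a] S\<sigma>[of b] by auto
    show "x \<in> S -` {a<..b} \<longleftrightarrow> x \<in> {\<sigma> a<..\<sigma> b}"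
      using h by (auto simp: not_less[symmetric])
  qed
  have Sb: "S \<in> borel_measurable borel"
    by (rule borel_measurable_continuous_onI) (simp add: continuous_at_imp_continuous_on Scont)
  have meq: "measurable nu lborel = measurable borel borel" by (rule measurable_cong_sets) auto
  have Sm: "S \<in> measurable nu lborel" using Sb meq by simp
  define \<mu> where "\<mu> = distr nu lborel S"
  have geo: "geodesic_pt m f t = \<mu>" by (simp add: geodesic_pt_def \<mu>_def S_def)
  have \<mu>prob: "prob_space \<mu>" unfolding \<mu>_def by (rule N.prob_space_distr[OF Sm])
  have \<mu>fin: "finite_measure \<mu>" using \<mu>prob by (simp add: prob_space_def)
  have \<mu>sets: "sets \<mu> = sets borel" by (simp add: \<mu>_def)
  have \<mu>Ioc: "measure \<mu> {a<..b} = cdf_of m (\<sigma> b) - cdf_of m (\<sigma> a)" if "a \<le> b" for a b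
    unfolding \<mu>_def using Sm pre[of a b] Fm_diff[OF \<sigma>mono[OF that]] by (simp add: measure_distr)
  have bnds: "p * measure nu {a<..b} \<le> measure \<mu> {a<..b} \<and> measure \<mu> {a<..b} \<le> q * measure nu {a<..b}" if ab: "a \<le> b" for a b
  proof -
    have c1: "kk L c C D * (cdf_of m (\<sigma> b) - cdf_of m (\<sigma> a)) \<le> cdf_of m b - cdf_of m a"
      using cmp_global(1)[OF D t \<sigma>mono[OF ab]] S\<sigma>[of a] S\<sigma>[of b] by (simp add: S_def)
    have c2: "cdf_of m b - cdf_of m a \<le> KK L c D * (cdf_of m (\<sigma> b) - cdf_of m (\<sigma> a))"
      using cmp_global(2)[OF D t \<sigma>mono[OF ab]] S\<sigma>[of a] S\<sigma>[of b] by (simp add: S_def)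
    define X where "X = measure \<mu> {a<..b}"
    define Y where "Y = measure nu {a<..b}"
    have c1': "kk L c C D * X \<le> Y" using c1 \<mu>Ioc[OF ab] Fm_diff[OF ab] by (simp add: X_def Y_def)
    have c2': "Y \<le> KK L c D * X" using c2 \<mu>Ioc[OF ab] Fm_diff[OF ab] by (simp add: X_def Y_def)
    have "p * Y \<le> p * (KK L c D * X)" using c2' p by (intro mult_left_mono) auto
    also have "\<dots> = X" using KK1 by (simp add: p_def)
    finally have i: "p * Y \<le> X" .
    have "X = q * (kk L c C D * X)" using kkp by (simp add: q_def)
    also have "\<dots> \<le> q * Y" using c1' q by (intro mult_left_mono) auto
    finally have ii: "X \<le> q * Y" .
    show ?thesis using i ii by (simp add: X_def Y_def)
  qed
  have lo: "ennreal p * emeasure nu A \<le> emeasure \<mu> A" if A: "A \<in> sets borel" for A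
  proof -
    have "emeasure (density lborel (\<lambda>x. ennreal (p * m x))) A \<le> emeasure \<mu> A"
    proof (rule measure_le_from_Ioc[OF scaled_fin \<mu>fin _ \<mu>sets _ A])
      show "0 \<le> p" using p by simp
      show "sets (density lborel (\<lambda>x. ennreal (p * m x))) = sets borel" by simp
      fix a b :: real assume "a \<le> b"
      then show "measure (density lborel (\<lambda>x. ennreal (p * m x))) {a<..b} \<le> measure \<mu> {a<..b}"
        using bnds[of a b] scaled_measure[of p "{a<..b}"] p by simp
    qed
    then show ?thesis using scaled_nu[of p A] p A by simp
  qed
  have hi: "emeasure \<mu> A \<le> ennreal q * emeasure nu A" if A: "A \<in> sets borel" for A
  proof -
    have "emeasure \<mu> A \<le> emeasure (density lborel (\<lambda>x. ennreal (q * m x))) A"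
    proof (rule measure_le_from_Ioc[OF \<mu>fin scaled_fin \<mu>sets _ _ A])
      show "0 \<le> q" using q by simp
      show "sets (density lborel (\<lambda>x. ennreal (q * m x))) = sets borel" by simp
      fix a b :: real assume "a \<le> b"
      then show "measure \<mu> {a<..b} \<le> measure (density lborel (\<lambda>x. ennreal (q * m x))) {a<..b}"
        using bnds[of a b] scaled_measure[of q "{a<..b}"] q by simp
    qed
    then show ?thesis using scaled_nu[of q A] q A by simp
  qed
  have pq: "p \<le> q" using p q by linarith
  have "\<exists>g \<in> borel_measurable borel. (\<forall>x. p * m x \<le> g x \<and> g x \<le> q * m x) \<and> \<mu> = density lborel (\<lambda>x. ennreal (g x))"
    by (rule density_from_bounds[OF m_borel m_pos nu_fin \<mu>fin \<mu>sets p(1) pq lo hi])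
  then obtain g where gb: "g \<in> borel_measurable borel" and gbd: "\<And>x. p * m x \<le> g x \<and> g x \<le> q * m x"
    and g\<mu>: "\<mu> = density lborel (\<lambda>x. ennreal (g x))" by blast
  have "g \<in> Pab p (q + p) m"
    unfolding Pab_def
  proof (intro CollectI conjI allI)
    show "g \<in> borel_measurable borel" by (rule gb)
    show "prob_space (density lborel (\<lambda>x. ennreal (g x)))" using \<mu>prob g\<mu> by simp
    fix x show "p * m x \<le> g x" using gbd[of x] by simp
    have "0 \<le> p * m x" using p m_pos[of x] by simp
    then show "g x \<le> (q + p) * m x" using gbd[of x] by (simp add: distrib_right)
  qed
  then show ?thesis using geo g\<mu> by (auto simp: p_def q_def add.commute)
qed

end


context LC begin

lemma tails: "\<exists>x1 x2 h. 0 < h \<and>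
   (\<forall>x y. x2 \<le> x \<longrightarrow> x \<le> y \<longrightarrow> measure nu {y<..} \<le> exp (- (h * (y - x))) * measure nu {x<..}) \<and>
   (\<forall>x y. x \<le> y \<longrightarrow> y \<le> x1 \<longrightarrow> measure nu {..x} \<le> exp (- (h * (y - x))) * measure nu {..y})"
proof -
  obtain p q where pq: "p < q" "V p < V q" using exists_up by blast
  obtain p' q' where pq': "p' < q'" "V q' < V p'" using exists_down by blast
  define h1 where "h1 = (V q - V p) / (q - p)"
  define h2 where "h2 = (V p' - V q') / (q' - p')"
  define h where "h = min h1 h2"
  have h1: "0 < h1" using pq by (simp add: h1_def)
  have h2: "0 < h2" using pq' by (simp add: h2_def)
  have h: "0 < h" using h1 h2 by (simp add: h_def)
  have ex: "exp (- (h1' * z)) \<le> exp (- (h * z))" if "h \<le> h1'" "0 \<le> z" for h1' z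
    using that by (simp add: mult_right_mono)
  have R: "measure nu {y<..} \<le> exp (- (h * (y - x))) * measure nu {x<..}" if "q \<le> x" "x \<le> y" for x y
  proof -
    have "measure nu {y<..} \<le> exp (- (h1 * (y - x))) * measure nu {x<..}"
      using right_decay[OF pq that] by (simp add: h1_def)
    also have "\<dots> \<le> exp (- (h * (y - x))) * measure nu {x<..}"
      using ex[of h1 "y - x"] that by (intro mult_right_mono) (auto simp: h_def)
    finally show ?thesis .
  qed
  have Lf: "measure nu {..x} \<le> exp (- (h * (y - x))) * measure nu {..y}" if "x \<le> y" "y \<le> p'" for x y
  proof -
    have "measure nu {..x} \<le> exp (- (h2 * (y - x))) * measure nu {..y}"
      using left_decay[OF pq' that(2) that(1)] by (simp add: h2_def)
    also have "\<dots> \<le> exp (- (h * (y - x))) * measure nu {..y}"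
      using ex[of h2 "y - x"] that by (intro mult_right_mono) (auto simp: h_def)
    finally show ?thesis .
  qed
  show ?thesis using h R Lf by blast
qed

end

lemma B_ge1:
  fixes c C :: real
  assumes c: "0 < c" and cC: "c < C" shows "1 \<le> max C (1 / c)"
proof (cases "c \<le> 1")
  case True
  then have "1 \<le> 1 / c" using c by (simp add: field_simps)
  then show ?thesis by (simp add: le_max_iff_disj)
next
  case False then show ?thesis using cC by (simp add: le_max_iff_disj)
qed

theorem proposition2p8:
  fixes V :: "real \<Rightarrow> real" and L :: real
  assumes "convex_on UNIV V"
    and "L-lipschitz_on UNIV V"
    and "prob_space (density lborel (\<lambda>x. ennreal (exp (- V x))))"
  shows "\<forall>c C. 0 < c \<and> c < C \<longrightarrow>
           (\<exists>c' C'. 0 < c' \<and> c' < C' \<and>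
              (\<forall>f \<in> Pab c C (\<lambda>x. exp (- V x)). \<forall>t\<in>{0..1}.
                 \<exists>g \<in> Pab c' C' (\<lambda>x. exp (- V x)).
                   geodesic_pt (\<lambda>x. exp (- V x)) f t = density lborel (\<lambda>x. ennreal (g x))))"
proof -
  interpret LC V L by (rule LC.intro[OF assms])
  obtain x1 x2 h where h: "0 < h"
    and R: "\<And>x y. x2 \<le> x \<Longrightarrow> x \<le> y \<Longrightarrow> measure nu {y<..} \<le> exp (- (h * (y - x))) * measure nu {x<..}"
    and Lf: "\<And>x y. x \<le> y \<Longrightarrow> y \<le> x1 \<Longrightarrow> measure nu {..x} \<le> exp (- (h * (y - x))) * measure nu {..y}"
    using tails by blast
  show ?thesis
  proof (intro allI impI)
    fix c C :: real assume cC: "0 < c \<and> c < C"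
    define D where "D = \<bar>x2 - x1\<bar> + 2 * (ln (max C (1 / c)) / h)"
    have "0 \<le> ln (max C (1 / c))" using B_ge1[of c C] cC by simp
    then have D0: "0 \<le> D" unfolding D_def using h by simp
    have Cp: "0 < C" using cC by simp
    have KK1: "1 \<le> KK L c D" by (rule KK_ge1[OF L_nonneg D0 Cp])
    have kkp: "0 < kk L c C D" by (rule kk_pos[OF Cp])
    show "\<exists>c' C'. 0 < c' \<and> c' < C' \<and>
              (\<forall>f \<in> Pab c C (\<lambda>x. exp (- V x)). \<forall>t\<in>{0..1}.
                 \<exists>g \<in> Pab c' C' (\<lambda>x. exp (- V x)).
                   geodesic_pt (\<lambda>x. exp (- V x)) f t = density lborel (\<lambda>x. ennreal (g x)))"
    proof (intro exI conjI ballI)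
      show "0 < 1 / KK L c D" using KK1 by simp
      show "1 / KK L c D < 1 / kk L c C D + 1 / KK L c D" using kkp by simp
      fix f and t :: real assume f: "f \<in> Pab c C (\<lambda>x. exp (- V x))" and t: "t \<in> {0..1}"
      interpret LF V L c C f by (rule LF.intro[OF LC.intro[OF assms] LF_axioms.intro]) (use cC f in auto)
      have Db: "\<bar>T x - x\<bar> \<le> D" for x unfolding D_def by (rule dist_bound[OF h R Lf])
      show "\<exists>g \<in> Pab (1 / KK L c D) (1 / kk L c C D + 1 / KK L c D) (\<lambda>x. exp (- V x)).
                   geodesic_pt (\<lambda>x. exp (- V x)) f t = density lborel (\<lambda>x. ennreal (g x))"
        using geo_density[OF Db] t by auto
    qed
  qed
qed


end
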